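(* Let $f(z)=\prod_{j=1}^\infty(1+z/b_j)$, $z\in\mathbb{C}$, where $(b_j)_{j\ge1}$ is an increasing sequence of positive numbers with $\sum_{j\ge1}1/b_j<+\infty$. If $\lim_{t\to+\infty}\sigma_f^2(t)=+\infty$, then $f$ is Gaussian.
   Context: Such $f$ is an entire function with non-negative Taylor coefficients and $f(0)=1$. For $t>0$, $X_t$ is the random variable with $\mathbf{P}(X_t=n)=a_nt^n/f(t)$, $n\ge0$, where $f(z)=\sum a_nz^n$. Write $m_f(t)=\mathbf{E}(X_t)=\sum_j t/(b_j+t)$, $\sigma_f^2(t)=\mathbf{V}(X_t)=\sum_j tb_j/(b_j+t)^2$, and $\breve{X}_t=(X_t-m_f(t))/\sigma_f(t)$. $f$ is called Gaussian if $\breve{X}_t$ converges in distribution to a standard normal random variable as $t\to+\infty$. *)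

theory Defs
  imports "HOL-Analysis.Analysis" "HOL-Probability.Probability"
begin

text \<open>The entire function f(z) = prod_{j>=1} (1 + z / b_j) (indices shifted to start at 0).\<close>
definition prodf :: "(nat \<Rightarrow> real) \<Rightarrow> complex \<Rightarrow> complex" where
  "prodf b z = (\<Prod>j. 1 + z / complex_of_real (b j))"

definition taylor_coeff :: "(nat \<Rightarrow> real) \<Rightarrow> nat \<Rightarrow> real" where
  "taylor_coeff b n = Re ((deriv ^^ n) (prodf b) 0 / of_nat (fact n))"

definition fval :: "(nat \<Rightarrow> real) \<Rightarrow> real \<Rightarrow> real" where
  "fval b t = Re (prodf b (complex_of_real t))"

text \<open>P(X_t = n) = a_n t^n / f(t).\<close>
definition Xprob :: "(nat \<Rightarrow> real) \<Rightarrow> real \<Rightarrow> nat \<Rightarrow> real" where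
  "Xprob b t n = taylor_coeff b n * t ^ n / fval b t"

definition mean_f :: "(nat \<Rightarrow> real) \<Rightarrow> real \<Rightarrow> real" where
  "mean_f b t = (\<Sum>n. real n * Xprob b t n)"

definition var_f :: "(nat \<Rightarrow> real) \<Rightarrow> real \<Rightarrow> real" where
  "var_f b t = (\<Sum>n. (real n - mean_f b t)\<^sup>2 * Xprob b t n)"

definition normalized_cdf :: "(nat \<Rightarrow> real) \<Rightarrow> real \<Rightarrow> real \<Rightarrow> real" where
  "normalized_cdf b t x =
     (\<Sum>n. if (real n - mean_f b t) / sqrt (var_f b t) \<le> x then Xprob b t n else 0)"

definition std_normal_cdf :: "real \<Rightarrow> real" where
  "std_normal_cdf x = (LBINT y:{..x}. std_normal_density y)"

text \<open>f is Gaussian: the normalized X_t converges in distribution to N(0,1) as t \<rightarrow> +\<infinity>,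
  i.e. the distribution functions converge at every point (the limit CDF is continuous).\<close>
definition gaussian :: "(nat \<Rightarrow> real) \<Rightarrow> bool" where
  "gaussian b \<longleftrightarrow> (\<forall>x. ((\<lambda>t. normalized_cdf b t x) \<longlongrightarrow> std_normal_cdf x) at_top)"

end

theory Submission
  imports Defs "HOL-Complex_Analysis.Complex_Analysis"
begin
lemma wf0: "weierstrass_factor 0 z = 1 - z"
  by (simp add: weierstrass_factor_def)

locale bprod =
  fixes b :: "nat \<Rightarrow> real"
  assumes bpos: "\<And>j. b j > 0"
    and bsum: "summable (\<lambda>j. 1 / b j)"
begin

lemma b_lim: "filterlim b at_top sequentially"
proof -
  have "(\<lambda>j. 1 / b j) \<longlonglongrightarrow> 0" using bsum summable_LIMSEQ_zero by blast
  hence "(\<lambda>j. inverse (b j)) \<longlonglongrightarrow> 0" by (simp add: inverse_eq_divide)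
  moreover have "\<forall>\<^sub>F j in sequentially. 0 < inverse (b j)" using bpos by simp
  ultimately have "filterlim (\<lambda>j. inverse (b j)) (at_right 0) sequentially"
    by (simp add: filterlim_at_right_to_0 tendsto_imp_filterlim_at_right)
  hence "filterlim (\<lambda>j. inverse (inverse (b j))) at_top sequentially"
    using filterlim_inverse_at_top_right filterlim_compose by blast
  thus ?thesis by simp
qed

lemma wp: "weierstrass_product (\<lambda>n. - complex_of_real (b n)) (\<lambda>_. 0)"
proof
  show "- complex_of_real (b n) \<noteq> 0" for n using bpos[of n] by simp
  show "filterlim (\<lambda>n. - complex_of_real (b n)) at_infinity sequentially"
    unfolding filterlim_at_infinity_conv_norm_at_top
    using b_lim bpos by (simp add: filterlim_cong abs_of_pos less_imp_le)
  show "summable (\<lambda>n. (r / cmod (- complex_of_real (b n))) ^ Suc 0)" for r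
    using summable_mult[OF bsum, of r] bpos by (simp add: abs_of_pos less_imp_le)
qed

lemma factor_eq: "weierstrass_factor 0 (- (z / complex_of_real (b n))) = 1 + z / complex_of_real (b n)"
  by (simp add: wf0)

lemma prodf_eq: "prodf b = weierstrass_product.f (\<lambda>n. - complex_of_real (b n)) (\<lambda>_. 0)"
  using weierstrass_product.f_def[OF wp] by (simp add: prodf_def factor_eq fun_eq_iff)

lemma holo: "prodf b holomorphic_on A"
  unfolding prodf_eq by (rule weierstrass_product.holomorphic[OF wp])

lemma ulim: "R > 0 \<Longrightarrow> uniform_limit (cball 0 R) (\<lambda>N z. \<Prod>n<N. 1 + z / complex_of_real (b n)) (prodf b) sequentially"
  using weierstrass_product.uniform_limit[OF wp, of R] unfolding prodf_eq by (simp add: factor_eq)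

lemma nz: "prodf b z = 0 \<longleftrightarrow> z \<in> range (\<lambda>n. - complex_of_real (b n))"
  unfolding prodf_eq by (rule weierstrass_product.zero[OF wp])

lemma pw: "(\<lambda>N. \<Prod>n<N. 1 + z / complex_of_real (b n)) \<longlonglongrightarrow> prodf b z"
proof -
  have z: "z \<in> cball 0 (norm z + 1)" by simp
  have "norm z + 1 > 0" by (simp add: add_nonneg_pos)
  from tendsto_uniform_limitI[OF ulim[OF this] z] show ?thesis .
qed

end

definition nnr :: "complex \<Rightarrow> bool" where "nnr z \<longleftrightarrow> Im z = 0 \<and> 0 \<le> Re z"

lemma nnr_mult: "nnr a \<Longrightarrow> nnr c \<Longrightarrow> nnr (a * c)"
  by (simp add: nnr_def)

lemma nnr_sum: "(\<And>i. i \<in> A \<Longrightarrow> nnr (g i)) \<Longrightarrow> nnr (sum g A)"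
  by (auto simp: nnr_def Im_sum Re_sum intro!: sum_nonneg)

lemma nnr_of_nat: "nnr (of_nat n)" by (simp add: nnr_def)

lemma lin_hd: "c \<noteq> 0 \<Longrightarrow> (deriv ^^ k) (\<lambda>w. 1 + w / c) = (\<lambda>z. if k = 0 then 1 + z / c else if k = 1 then 1 / c else (0::complex))"
proof (induction k)
  case 0 then show ?case by simp
next
  case (Suc k)
  note cnz = Suc.prems
  have "(deriv ^^ Suc k) (\<lambda>w. 1 + w / c) = deriv ((deriv ^^ k) (\<lambda>w. 1 + w / c))" by simp
  also have "\<dots> = deriv (\<lambda>z. if k = 0 then 1 + z / c else if k = 1 then 1 / c else (0::complex))"
    by (simp add: Suc)
  also have "\<dots> = (\<lambda>z. if Suc k = 0 then 1 + z / c else if Suc k = 1 then 1 / c else (0::complex))"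
  proof (cases "k = 0")
    case True
    have "deriv (\<lambda>z. 1 + z / c) z = 1 / c" for z
      by (rule DERIV_imp_deriv) (use cnz in \<open>auto intro!: derivative_eq_intros\<close>)
    then show ?thesis using True by (auto simp: fun_eq_iff)
  next
    case False
    then show ?thesis by (auto simp: fun_eq_iff)
  qed
  finally show ?case .
qed

context bprod
begin

lemma bnz: "complex_of_real (b k) \<noteq> 0" using bpos[of k] by simp

definition PN :: "nat \<Rightarrow> complex \<Rightarrow> complex" where
  "PN N z = (\<Prod>k<N. 1 + z / complex_of_real (b k))"

lemma PN_holo: "PN N holomorphic_on A"
  unfolding PN_def by (intro holomorphic_on_prod holomorphic_intros) (use bnz in auto)

lemma PN_nnr: "nnr ((deriv ^^ n) (PN N) 0)"
proof (induction N arbitrary: n)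
  case 0
  have "PN 0 = (\<lambda>z. 1)" by (simp add: PN_def fun_eq_iff)
  then show ?case by (simp add: nnr_def)
next
  case (Suc N)
  have e: "PN (Suc N) = (\<lambda>z. PN N z * (1 + z / complex_of_real (b N)))"
    by (simp add: PN_def fun_eq_iff)
  have h2: "(\<lambda>z. 1 + z / complex_of_real (b N)) holomorphic_on UNIV"
    using bpos[of N] by (auto intro!: holomorphic_intros)
  have "(deriv ^^ n) (PN (Suc N)) 0 = (\<Sum>i = 0..n. of_nat (n choose i) * (deriv ^^ i) (PN N) 0 *
      (deriv ^^ (n-i)) (\<lambda>z. 1 + z / complex_of_real (b N)) 0)"
    unfolding e by (rule higher_deriv_mult[OF PN_holo h2]) auto
  also have "nnr \<dots>"
  proof (rule nnr_sum, intro nnr_mult nnr_of_nat Suc.IH)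
    fix i show "nnr ((deriv ^^ (n - i)) (\<lambda>z. 1 + z / complex_of_real (b N)) 0)"
      using bpos[of N] bnz[of N] by (simp add: lin_hd nnr_def less_imp_le)
  qed
  finally show ?case .
qed

lemma deriv_lim: "(\<lambda>N. (deriv ^^ n) (PN N) 0) \<longlonglongrightarrow> (deriv ^^ n) (prodf b) 0"
proof (rule higher_deriv_complex_uniform_limit)
  show "uniform_limit (ball 0 1) PN (prodf b) sequentially"
    using uniform_limit_on_subset[OF ulim[of 1] ball_subset_cball] unfolding PN_def[abs_def] by simp
qed (auto intro!: always_eventually PN_holo)

lemma deriv_nnr: "nnr ((deriv ^^ n) (prodf b) 0)"
proof -
  have "(\<lambda>N. Im ((deriv ^^ n) (PN N) 0)) \<longlonglongrightarrow> Im ((deriv ^^ n) (prodf b) 0)"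
    by (intro tendsto_Im deriv_lim)
  moreover have "(\<lambda>N. Im ((deriv ^^ n) (PN N) 0)) = (\<lambda>N. 0)"
    using PN_nnr by (simp add: nnr_def)
  ultimately have 1: "Im ((deriv ^^ n) (prodf b) 0) = 0"
    using LIMSEQ_unique tendsto_const by metis
  have "(\<lambda>N. Re ((deriv ^^ n) (PN N) 0)) \<longlonglongrightarrow> Re ((deriv ^^ n) (prodf b) 0)"
    by (intro tendsto_Re deriv_lim)
  hence 2: "0 \<le> Re ((deriv ^^ n) (prodf b) 0)"
    by (rule tendsto_lowerbound) (use PN_nnr in \<open>auto simp: nnr_def\<close>)
  show ?thesis using 1 2 by (simp add: nnr_def)
qed

lemma tc_nonneg: "taylor_coeff b n \<ge> 0"
  using deriv_nnr[of n] by (simp add: taylor_coeff_def nnr_def Re_divide)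

lemma tc_eq: "(deriv ^^ n) (prodf b) 0 / fact n = complex_of_real (taylor_coeff b n)"
proof -
  define r where "r = Re ((deriv ^^ n) (prodf b) 0)"
  have e: "(deriv ^^ n) (prodf b) 0 = complex_of_real r"
    using deriv_nnr[of n] by (simp add: nnr_def complex_eq_iff r_def)
  have "complex_of_real r / fact n = complex_of_real (r / fact n)"
    by (simp add: of_real_divide)
  then show ?thesis unfolding taylor_coeff_def e by (metis Re_complex_of_real of_nat_fact)
qed

lemma taylor: "(\<lambda>n. complex_of_real (taylor_coeff b n) * w ^ n) sums prodf b w"
proof -
  have "(\<lambda>n. (deriv ^^ n) (prodf b) 0 / fact n * (w - 0) ^ n) sums prodf b w"
    by (rule holomorphic_power_series[of _ _ "norm w + 1"]) (auto intro: holo)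
  thus ?thesis by (simp add: tc_eq)
qed

end

lemma sums_real:
  assumes "(\<lambda>n. complex_of_real (g n)) sums s"
  shows "g sums Re s" "s = complex_of_real (Re s)"
proof -
  show "g sums Re s" using sums_Re[OF assms] by simp
  have "(\<lambda>n. 0) sums Im s" using sums_Im[OF assms] by simp
  hence "Im s = 0" using sums_zero sums_unique2 by blast
  thus "s = complex_of_real (Re s)" by (simp add: complex_eq_iff)
qed

context bprod
begin

abbreviation a where "a \<equiv> taylor_coeff b"
abbreviation f where "f \<equiv> prodf b"

lemma hd_taylor: "(\<lambda>n. complex_of_real (a (n + k) * fact (n + k) / fact n) * w ^ n) sums (deriv ^^ k) f w"
proof -
  have "(\<lambda>n. (deriv ^^ n) ((deriv ^^ k) f) 0 / fact n * (w - 0) ^ n) sums (deriv ^^ k) f w"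
    by (rule holomorphic_power_series[of _ _ "norm w + 1"]) (auto intro!: holomorphic_higher_deriv holo)
  moreover have "(deriv ^^ n) ((deriv ^^ k) f) 0 / fact n = complex_of_real (a (n + k) * fact (n + k) / fact n)" for n
  proof -
    have "(deriv ^^ n) ((deriv ^^ k) f) 0 = (deriv ^^ (n + k)) f 0" by (simp add: funpow_add)
    also have "\<dots> = complex_of_real (a (n + k)) * fact (n + k)"
      using tc_eq[of "n + k"] by (simp add: field_simps)
    finally show ?thesis by (simp add: of_real_divide)
  qed
  ultimately show ?thesis by simp
qed

lemma D1_series: "(\<lambda>n. complex_of_real (real n * a n) * w ^ n) sums (w * deriv f w)"
proof -
  have "(\<lambda>n. w * (complex_of_real (a (n + 1) * fact (n + 1) / fact n) * w ^ n)) sums (w * (deriv ^^ 1) f w)"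
    by (intro sums_mult hd_taylor)
  moreover have "(\<lambda>n. w * (complex_of_real (a (n + 1) * fact (n + 1) / fact n) * w ^ n)) =
      (\<lambda>n. complex_of_real (real (Suc n) * a (Suc n)) * w ^ Suc n)"
    by (rule ext) (simp add: field_simps)
  ultimately have "(\<lambda>n. complex_of_real (real (Suc n) * a (Suc n)) * w ^ Suc n) sums (w * deriv f w)"
    by simp
  thus ?thesis by (subst (asm) sums_Suc_iff) simp
qed

lemma D2_series: "(\<lambda>n. complex_of_real (real n * (real n - 1) * a n) * w ^ n) sums (w^2 * deriv (deriv f) w)"
proof -
  have "(\<lambda>n. w^2 * (complex_of_real (a (n + 2) * fact (n + 2) / fact n) * w ^ n)) sums (w^2 * (deriv ^^ 2) f w)"
    by (intro sums_mult hd_taylor)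
  moreover have "(\<lambda>n. w^2 * (complex_of_real (a (n + 2) * fact (n + 2) / fact n) * w ^ n)) =
      (\<lambda>n. complex_of_real (real (Suc (Suc n)) * (real (Suc (Suc n)) - 1) * a (Suc (Suc n))) * w ^ Suc (Suc n))"
    by (rule ext) (simp add: field_simps power2_eq_square)
  moreover have "(deriv ^^ 2) f = deriv (deriv f)" by (simp add: numeral_2_eq_2)
  ultimately have "(\<lambda>n. complex_of_real (real (Suc (Suc n)) * (real (Suc (Suc n)) - 1) * a (Suc (Suc n))) * w ^ Suc (Suc n)) sums (w^2 * deriv (deriv f) w)"
    by simp
  thus ?thesis by (subst (asm) sums_Suc_iff, subst (asm) sums_Suc_iff) simp
qed

lemma f_real_series: "(\<lambda>n. a n * t ^ n) sums fval b t" and f_real: "f (complex_of_real t) = complex_of_real (fval b t)"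
proof -
  have "(\<lambda>n. complex_of_real (a n * t ^ n)) sums f (complex_of_real t)"
    using taylor[of "complex_of_real t"] by simp
  from sums_real[OF this] show "(\<lambda>n. a n * t ^ n) sums fval b t" "f (complex_of_real t) = complex_of_real (fval b t)"
    by (simp_all add: fval_def)
qed

lemma fval_pos: assumes "t \<ge> 0" shows "fval b t > 0"
proof -
  have "fval b t \<ge> 0"
  proof (rule sums_le[OF _ sums_zero f_real_series])
    fix n show "0 \<le> a n * t ^ n" using assms tc_nonneg[of n] by simp
  qed
  moreover have "fval b t \<noteq> 0"
  proof
    assume "fval b t = 0"
    hence "f (complex_of_real t) = 0" by (simp add: f_real)
    hence "complex_of_real t \<in> range (\<lambda>n. - complex_of_real (b n))" using nz by blast
    then obtain n where "complex_of_real t = - complex_of_real (b n)" by blast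
    hence "Re (complex_of_real t) = Re (- complex_of_real (b n))" by (rule arg_cong)
    hence "t = - b n" by simp
    thus False using bpos[of n] assms by simp
  qed
  ultimately show ?thesis by simp
qed

lemma notin_range: "Re z \<ge> 0 \<Longrightarrow> z \<notin> range (\<lambda>n. - complex_of_real (b n))"
  using bpos by (auto simp: less_le_not_le)

lemma logd: assumes "z \<notin> range (\<lambda>n. - complex_of_real (b n))"
  shows "(\<lambda>k. 1 / (complex_of_real (b k) + z)) sums (deriv f z / f z)"
proof -
  define R where "R = norm z + 1"
  have R: "R > 0" "z \<in> ball 0 R" by (auto simp: R_def add_nonneg_pos)
  have "(\<lambda>k. deriv (\<lambda>z. 1 + z / complex_of_real (b k)) z / (1 + z / complex_of_real (b k))) sums (deriv f z / f z)"
  proof (rule logderiv_prodinf_complex_uniform_limit)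
    show "uniform_limit (ball 0 R) (\<lambda>n x. \<Prod>k<n. 1 + x / complex_of_real (b k)) f sequentially"
      using uniform_limit_on_subset[OF ulim[OF R(1)] ball_subset_cball] .
    show "f z \<noteq> 0" using nz assms by auto
  qed (use R bnz in \<open>auto intro!: holomorphic_intros\<close>)
  moreover have "deriv (\<lambda>z. 1 + z / complex_of_real (b k)) z / (1 + z / complex_of_real (b k)) = 1 / (complex_of_real (b k) + z)" for k
  proof -
    have "deriv (\<lambda>z. 1 + z / complex_of_real (b k)) z = 1 / complex_of_real (b k)"
      by (rule DERIV_imp_deriv) (use bnz in \<open>auto intro!: derivative_eq_intros\<close>)
    moreover have "complex_of_real (b k) + z \<noteq> 0"
    proof -
      have "z \<noteq> - complex_of_real (b k)" using assms by auto
      thus ?thesis by (simp add: add_eq_0_iff)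
    qed
    ultimately show ?thesis using bnz[of k] by (simp add: field_simps)
  qed
  ultimately show ?thesis by simp
qed

definition U :: "complex set" where "U = {z. Re z > 0}"

lemma U_open: "open U" unfolding U_def by (rule open_halfspace_Re_gt)

lemma bz_bound: assumes "z \<in> U" shows "norm (1 / (complex_of_real (b k) + z)) \<le> 1 / b k"
proof -
  have "b k \<le> Re (complex_of_real (b k) + z)" using assms by (simp add: U_def)
  also have "\<dots> \<le> norm (complex_of_real (b k) + z)" by (rule complex_Re_le_cmod)
  finally show ?thesis using bpos[of k] by (simp add: norm_divide frac_le)
qed

lemma bz_nz: "z \<in> U \<Longrightarrow> complex_of_real (b k) + z \<noteq> 0"
  using bpos[of k] by (auto simp: U_def complex_eq_iff)

lemma L_ulim: "uniform_limit U (\<lambda>N z. \<Sum>k<N. 1 / (complex_of_real (b k) + z)) (\<lambda>z. deriv f z / f z) sequentially"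
proof -
  have "uniform_limit U (\<lambda>N z. \<Sum>k<N. 1 / (complex_of_real (b k) + z)) (\<lambda>z. \<Sum>k. 1 / (complex_of_real (b k) + z)) sequentially"
    by (rule Weierstrass_m_test[OF bz_bound bsum])
  moreover have "(\<Sum>k. 1 / (complex_of_real (b k) + z)) = deriv f z / f z" if "z \<in> U" for z
    using logd[OF notin_range] that by (simp add: U_def sums_iff)
  moreover have "uniform_limit U (\<lambda>N z. \<Sum>k<N. 1 / (complex_of_real (b k) + z)) (\<lambda>z. \<Sum>k. 1 / (complex_of_real (b k) + z)) sequentially
     = uniform_limit U (\<lambda>N z. \<Sum>k<N. 1 / (complex_of_real (b k) + z)) (\<lambda>z. deriv f z / f z) sequentially"
    by (rule uniform_limit_cong) (auto simp: calculation(2))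
  ultimately show ?thesis by simp
qed

lemma L_deriv: assumes "t > 0"
  shows "(\<lambda>k. - 1 / (complex_of_real (b k) + complex_of_real t)^2) sums deriv (\<lambda>z. deriv f z / f z) (complex_of_real t)"
proof -
  have tU: "complex_of_real t \<in> U" using assms by (simp add: U_def)
  have "(\<lambda>N. deriv (\<lambda>z. \<Sum>k<N. 1 / (complex_of_real (b k) + z)) (complex_of_real t)) \<longlonglongrightarrow> deriv (\<lambda>z. deriv f z / f z) (complex_of_real t)"
    by (rule deriv_complex_uniform_limit[OF L_ulim]) (use U_open tU bz_nz in \<open>auto intro!: always_eventually holomorphic_intros\<close>)
  moreover have "deriv (\<lambda>z. \<Sum>k<N. 1 / (complex_of_real (b k) + z)) (complex_of_real t) = (\<Sum>k<N. - 1 / (complex_of_real (b k) + complex_of_real t)^2)" for N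
    by (rule DERIV_imp_deriv) (use bz_nz[OF tU] in \<open>auto intro!: derivative_eq_intros simp: power2_eq_square\<close>)
  ultimately show ?thesis by (simp add: sums_def)
qed

lemma deriv_L_eq: assumes "f z \<noteq> 0"
  shows "deriv (\<lambda>z. deriv f z / f z) z = (deriv (deriv f) z * f z - deriv f z * deriv f z) / (f z * f z)"
proof -
  have "deriv f holomorphic_on UNIV" using holomorphic_higher_deriv[OF holo, of UNIV 1] by simp
  hence d1: "(deriv f has_field_derivative deriv (deriv f) z) (at z)"
    using DERIV_deriv_iff_field_differentiable holomorphic_on_imp_differentiable_at[OF _ open_UNIV UNIV_I] by blast
  have d2: "(f has_field_derivative deriv f z) (at z)"
    using DERIV_deriv_iff_field_differentiable holomorphic_on_imp_differentiable_at[OF holo open_UNIV UNIV_I] by blast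
  show ?thesis by (rule DERIV_imp_deriv) (rule DERIV_divide[OF d1 d2 assms])
qed

end

context bprod
begin

definition pp :: "real \<Rightarrow> nat \<Rightarrow> real" where "pp t k = t / (b k + t)"

lemma pp_bounds: "t > 0 \<Longrightarrow> 0 < pp t k \<and> pp t k < 1"
  using bpos[of k] by (simp add: pp_def)

lemma Xprob_nonneg: "t > 0 \<Longrightarrow> Xprob b t n \<ge> 0"
  using fval_pos[of t] tc_nonneg[of n] by (simp add: Xprob_def)

lemma Xprob_sums: "t > 0 \<Longrightarrow> Xprob b t sums 1"
proof -
  assume t: "t > 0"
  have "(\<lambda>n. a n * t ^ n / fval b t) sums (fval b t / fval b t)"
    by (intro sums_divide f_real_series)
  thus ?thesis using fval_pos[of t] t by (simp add: Xprob_def[abs_def])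
qed

lemma sums_realE:
  assumes "(\<lambda>n. complex_of_real (g n)) sums s"
  obtains r where "g sums r" "complex_of_real r = s"
proof
  show "g sums Re s" by (rule sums_real(1)[OF assms])
  show "complex_of_real (Re s) = s" by (rule sums_real(2)[OF assms, symmetric])
qed

lemma moments:
  assumes t: "t > 0"
  shows "(\<lambda>n. real n * Xprob b t n) sums (\<Sum>k. pp t k)"
    and "(\<lambda>n. real n * (real n - 1) * Xprob b t n) sums ((\<Sum>k. pp t k)^2 - (\<Sum>k. (pp t k)^2))"
    and "summable (pp t)" "summable (\<lambda>k. (pp t k)^2)"
proof -
  define F where "F = fval b t"
  have Fpos: "F > 0" unfolding F_def by (rule fval_pos) (use t in simp)
  define t' where "t' = complex_of_real t"
  define D1 where "D1 = deriv f t'"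
  define D2 where "D2 = deriv (deriv f) t'"
  have fF: "f t' = complex_of_real F" unfolding F_def t'_def by (rule f_real)
  have Fc: "complex_of_real F \<noteq> 0" using Fpos by simp
  have "(\<lambda>n. complex_of_real (real n * a n) * t' ^ n) sums (t' * D1)"
    unfolding D1_def by (rule D1_series)
  moreover have "(\<lambda>n. complex_of_real (real n * a n) * t' ^ n) = (\<lambda>n. complex_of_real (real n * a n * t ^ n))"
    by (simp add: t'_def)
  ultimately have "(\<lambda>n. complex_of_real (real n * a n * t ^ n)) sums (t' * D1)" by simp
  then obtain S1 where S1: "(\<lambda>n. real n * a n * t ^ n) sums S1" "complex_of_real S1 = t' * D1"
    by (rule sums_realE)
  have "(\<lambda>n. complex_of_real (real n * (real n - 1) * a n) * t' ^ n) sums (t'^2 * D2)"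
    unfolding D2_def by (rule D2_series)
  moreover have "(\<lambda>n. complex_of_real (real n * (real n - 1) * a n) * t' ^ n) = (\<lambda>n. complex_of_real (real n * (real n - 1) * a n * t ^ n))"
    by (simp add: t'_def)
  ultimately have "(\<lambda>n. complex_of_real (real n * (real n - 1) * a n * t ^ n)) sums (t'^2 * D2)" by simp
  then obtain S2 where S2: "(\<lambda>n. real n * (real n - 1) * a n * t ^ n) sums S2" "complex_of_real S2 = t'^2 * D2"
    by (rule sums_realE)
  have nr: "t' \<notin> range (\<lambda>n. - complex_of_real (b n))" by (rule notin_range) (use t in \<open>simp add: t'_def\<close>)
  have "(\<lambda>k. 1 / (complex_of_real (b k) + t')) sums (D1 / complex_of_real F)"
    using logd[OF nr] unfolding D1_def fF .
  moreover have "(\<lambda>k. 1 / (complex_of_real (b k) + t')) = (\<lambda>k. complex_of_real (1 / (b k + t)))"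
    by (simp add: t'_def)
  ultimately have "(\<lambda>k. complex_of_real (1 / (b k + t))) sums (D1 / complex_of_real F)" by simp
  then obtain l1 where l1: "(\<lambda>k. 1 / (b k + t)) sums l1" "complex_of_real l1 = D1 / complex_of_real F"
    by (rule sums_realE)
  have "(\<lambda>k. - 1 / (complex_of_real (b k) + t')^2) sums deriv (\<lambda>z. deriv f z / f z) t'"
    unfolding t'_def by (rule L_deriv[OF t])
  moreover have "deriv (\<lambda>z. deriv f z / f z) t' = (D2 * complex_of_real F - D1 * D1) / (complex_of_real F * complex_of_real F)"
    unfolding D1_def D2_def fF[symmetric] by (rule deriv_L_eq) (use fF Fc in simp)
  moreover have "(\<lambda>k. - 1 / (complex_of_real (b k) + t')^2) = (\<lambda>k. complex_of_real (- 1 / (b k + t)^2))"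
    by (simp add: t'_def)
  ultimately have "(\<lambda>k. complex_of_real (- 1 / (b k + t)^2)) sums ((D2 * complex_of_real F - D1 * D1) / (complex_of_real F * complex_of_real F))"
    by simp
  then obtain l2 where l2: "(\<lambda>k. - 1 / (b k + t)^2) sums l2"
      "complex_of_real l2 = (D2 * complex_of_real F - D1 * D1) / (complex_of_real F * complex_of_real F)"
    by (rule sums_realE)
  have e1: "S1 / F = t * l1"
  proof -
    have "complex_of_real (S1 / F) = complex_of_real (t * l1)"
      using Fc by (simp add: S1 l1 t'_def)
    thus ?thesis by (simp only: of_real_eq_iff)
  qed
  have e2: "S2 / F = t^2 * (l2 + l1^2)"
  proof -
    have "complex_of_real (S2 / F) = complex_of_real (t^2 * (l2 + l1^2))"
      using Fc by (simp add: S2 l1 l2 t'_def field_simps power2_eq_square)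
    thus ?thesis by (simp only: of_real_eq_iff)
  qed
  have pps: "pp t sums (t * l1)"
    using sums_mult[OF l1(1), of t] by (simp add: pp_def[abs_def])
  have pp2s: "(\<lambda>k. (pp t k)^2) sums (- (t^2 * l2))"
    using sums_minus[OF sums_mult[OF l2(1), of "t^2"]] by (simp add: pp_def power_divide)
  show "summable (pp t)" "summable (\<lambda>k. (pp t k)^2)" using pps pp2s by (auto simp: sums_iff)
  have "(\<lambda>n. real n * a n * t ^ n / F) sums (S1 / F)" by (intro sums_divide S1)
  thus "(\<lambda>n. real n * Xprob b t n) sums (\<Sum>k. pp t k)"
    using e1 pps by (simp add: Xprob_def F_def sums_iff mult.assoc)
  have "(\<lambda>n. real n * (real n - 1) * a n * t ^ n / F) sums (S2 / F)" by (intro sums_divide S2)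
  moreover have "S2 / F = (\<Sum>k. pp t k)^2 - (\<Sum>k. (pp t k)^2)"
    using e2 pps pp2s by (simp add: sums_iff power2_eq_square algebra_simps)
  ultimately show "(\<lambda>n. real n * (real n - 1) * Xprob b t n) sums ((\<Sum>k. pp t k)^2 - (\<Sum>k. (pp t k)^2))"
    by (simp add: Xprob_def F_def mult.assoc)
qed

lemma mean_eq: "t > 0 \<Longrightarrow> mean_f b t = (\<Sum>k. pp t k)"
  using moments(1) by (simp add: mean_f_def sums_iff)

lemma var_sums: assumes t: "t > 0" shows "(\<lambda>k. pp t k * (1 - pp t k)) sums var_f b t"
proof -
  define m where "m = mean_f b t"
  have m: "m = (\<Sum>k. pp t k)" using mean_eq t by (simp add: m_def)
  have "(\<lambda>n. real n * (real n - 1) * Xprob b t n + (1 - 2 * m) * (real n * Xprob b t n) + m^2 * Xprob b t n)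
     sums ((m^2 - (\<Sum>k. (pp t k)^2)) + (1 - 2 * m) * m + m^2 * 1)"
    using moments[OF t] Xprob_sums[OF t] unfolding m[symmetric]
    by (intro sums_add sums_mult) auto
  moreover have "real n * (real n - 1) * Xprob b t n + (1 - 2 * m) * (real n * Xprob b t n) + m^2 * Xprob b t n
     = (real n - m)^2 * Xprob b t n" for n
    by (simp add: power2_eq_square algebra_simps)
  ultimately have "(\<lambda>n. (real n - m)^2 * Xprob b t n) sums (m - (\<Sum>k. (pp t k)^2))"
    by (simp add: algebra_simps power2_eq_square)
  hence v: "var_f b t = m - (\<Sum>k. (pp t k)^2)" by (simp add: var_f_def m_def sums_iff)
  have "(\<lambda>k. pp t k - (pp t k)^2) sums (m - (\<Sum>k. (pp t k)^2))"
    unfolding m using moments(3,4)[OF t] by (intro sums_diff) (auto simp: sums_iff)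
  moreover have "m - (\<Sum>k. (pp t k)^2) = var_f b t" using v by simp
  ultimately show ?thesis by (simp add: algebra_simps power2_eq_square)
qed

end

lemma exp_neg_bound: fixes y :: real assumes "y \<ge> 0" shows "\<bar>exp (- y) - (1 - y)\<bar> \<le> y^2 / 2"
proof (cases "y = 0")
  case True then show ?thesis by simp
next
  case False
  hence y: "- y < 0" using assms by simp
  obtain t where t: "- y < t" "t < 0" "exp (- y) = (\<Sum>m<2. exp 0 / fact m * (- y) ^ m) + exp t / fact 2 * (- y) ^ 2"
    using Maclaurin_minus[OF y, of 2 "\<lambda>n. exp" exp] by (auto intro: DERIV_exp)
  have "exp (- y) - (1 - y) = exp t / 2 * y^2"
    using t(3) by (simp add: numeral_2_eq_2)
  moreover have "exp t / 2 * y^2 \<ge> 0" by simp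
  ultimately have "\<bar>exp (- y) - (1 - y)\<bar> = exp t / 2 * y^2" by linarith
  also have "\<dots> \<le> 1 / 2 * y^2" using t(2) by (intro mult_right_mono) auto
  finally show ?thesis by simp
qed

lemma iexp2: "cmod (iexp x - (1 + \<i> * complex_of_real x - complex_of_real (x^2 / 2))) \<le> \<bar>x\<bar>^3 / 6"
proof -
  have "(\<Sum>k \<le> 2. (\<i> * complex_of_real x)^k / fact k) = 1 + \<i> * complex_of_real x - complex_of_real (x^2 / 2)"
    by (simp add: numeral_2_eq_2 power2_eq_square field_simps)
  thus ?thesis using iexp_approx1[of x 2] by (simp add: numeral_3_eq_3)
qed

lemma bern:
  fixes p s :: real
  assumes p: "0 \<le> p" "p \<le> 1"
  shows "cmod (iexp (- s * p) * (complex_of_real (1 - p) + complex_of_real p * iexp s)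
           - complex_of_real (exp (- (s^2 * (p * (1 - p))) / 2))) \<le> p * (1 - p) * (\<bar>s\<bar>^3 / 6 + s^4 / 32)"
proof -
  define q where "q = 1 - p"
  have q: "0 \<le> q" "q \<le> 1" "p + q = 1" using p by (auto simp: q_def)
  define A where "A = (\<lambda>x. iexp x - (1 + \<i> * complex_of_real x - complex_of_real (x^2 / 2)))"
  define y where "y = s^2 * (p * q) / 2"
  have z: "iexp (- s * p) * (complex_of_real q + complex_of_real p * iexp s) = complex_of_real q * iexp (- s * p) + complex_of_real p * iexp (s * q)"
  proof -
    have "iexp (- s * p) * iexp s = iexp (s * q)"
      by (simp add: exp_add[symmetric] q_def algebra_simps)
    thus ?thesis by (simp add: algebra_simps)
  qed
  have eqA: "complex_of_real q * iexp (- s * p) + complex_of_real p * iexp (s * q) - complex_of_real (1 - y)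
      = complex_of_real q * A (- s * p) + complex_of_real p * A (s * q)"
  proof -
    have "complex_of_real q * (1 + \<i> * complex_of_real (- s * p) - complex_of_real ((- s * p)^2 / 2))
        + complex_of_real p * (1 + \<i> * complex_of_real (s * q) - complex_of_real ((s * q)^2 / 2))
        = complex_of_real (1 - y)"
    proof -
      have "q * p * s - p * q * s = 0" by simp
      have "complex_of_real q * (1 + \<i> * complex_of_real (- s * p) - complex_of_real ((- s * p)^2 / 2))
        + complex_of_real p * (1 + \<i> * complex_of_real (s * q) - complex_of_real ((s * q)^2 / 2))
        = complex_of_real (q + p - (q * (s*p)^2 + p * (s*q)^2) / 2)"
        by (simp add: algebra_simps power2_eq_square)
      also have "q + p - (q * (s*p)^2 + p * (s*q)^2) / 2 = 1 - y"
      proof -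
        have "q * (s*p)^2 + p * (s*q)^2 = s^2 * (p*q) * (p+q)" by (simp add: power2_eq_square algebra_simps)
        thus ?thesis using q(3) unfolding y_def by simp
      qed
      finally show ?thesis .
    qed
    thus ?thesis unfolding A_def by (simp add: algebra_simps)
  qed
  have "cmod (iexp (- s * p) * (complex_of_real q + complex_of_real p * iexp s) - complex_of_real (1 - y))
       \<le> q * cmod (A (- s * p)) + p * cmod (A (s * q))"
  proof -
    have "cmod (complex_of_real q * A (- s * p) + complex_of_real p * A (s * q)) \<le>
        cmod (complex_of_real q * A (- s * p)) + cmod (complex_of_real p * A (s * q))"
      by (rule norm_triangle_ineq)
    also have "\<dots> = q * cmod (A (- s * p)) + p * cmod (A (s * q))"
      using p q by (simp add: norm_mult)
    finally show ?thesis unfolding z eqA .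
  qed
  also have "\<dots> \<le> q * (\<bar>- s * p\<bar>^3 / 6) + p * (\<bar>s * q\<bar>^3 / 6)"
    unfolding A_def using p q by (intro add_mono mult_left_mono iexp2) auto
  also have "\<dots> = p * q * \<bar>s\<bar>^3 * (p^2 + q^2) / 6"
    using p q by (simp add: abs_mult power_mult_distrib power2_eq_square algebra_simps numeral_3_eq_3)
  also have "\<dots> \<le> p * q * \<bar>s\<bar>^3 / 6"
  proof -
    have "p^2 + q^2 = (p + q)^2 - 2 * (p * q)" by (simp add: power2_eq_square algebra_simps)
    moreover have "p * q \<ge> 0" using p q by simp
    ultimately have "p^2 + q^2 \<le> 1" using q(3) by simp
    thus ?thesis using p q by (simp add: mult_left_le)
  qed
  finally have 1: "cmod (iexp (- s * p) * (complex_of_real q + complex_of_real p * iexp s) - complex_of_real (1 - y)) \<le> p * q * \<bar>s\<bar>^3 / 6" .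
  have y0: "y \<ge> 0" using p q by (simp add: y_def)
  have "\<bar>exp (- y) - (1 - y)\<bar> \<le> y^2 / 2" by (rule exp_neg_bound[OF y0])
  also have "y^2 / 2 = s^4 * (p * q) * (p * q) / 8" by (simp add: y_def power2_eq_square power4_eq_xxxx)
  also have "\<dots> \<le> s^4 * (p * q) * (1/4) / 8"
  proof -
    have "(p - 1/2)^2 \<ge> 0" by simp
    hence "p * q \<le> 1/4" by (simp add: q_def power2_eq_square algebra_simps)
    thus ?thesis using p q by (intro divide_right_mono mult_left_mono) auto
  qed
  finally have 2: "cmod (complex_of_real (1 - y) - complex_of_real (exp (- y))) \<le> p * q * (s^4 / 32)"
    by (simp add: abs_minus_commute[of "exp (-y)"] norm_of_real[symmetric] of_real_diff[symmetric] mult_ac del: of_real_diff)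
  have "cmod (iexp (- s * p) * (complex_of_real q + complex_of_real p * iexp s) - complex_of_real (exp (- y)))
     \<le> cmod (iexp (- s * p) * (complex_of_real q + complex_of_real p * iexp s) - complex_of_real (1 - y))
      + cmod (complex_of_real (1 - y) - complex_of_real (exp (- y)))"
    using norm_triangle_ineq[of "iexp (- s * p) * (complex_of_real q + complex_of_real p * iexp s) - complex_of_real (1 - y)"
      "complex_of_real (1 - y) - complex_of_real (exp (- y))"] by simp
  also have "\<dots> \<le> p * q * \<bar>s\<bar>^3 / 6 + p * q * (s^4 / 32)" using 1 2 by simp
  finally have fin: "cmod (iexp (- s * p) * (complex_of_real q + complex_of_real p * iexp s) - complex_of_real (exp (- y)))
     \<le> p * q * \<bar>s\<bar>^3 / 6 + p * q * (s^4 / 32)" .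
  have e1: "- (s^2 * (p * q)) / 2 = - y" by (simp add: y_def)
  have e2: "p * q * \<bar>s\<bar>^3 / 6 + p * q * (s^4 / 32) = p * q * (\<bar>s\<bar>^3 / 6 + s^4 / 32)" by (simp add: algebra_simps)
  show ?thesis unfolding q_def[symmetric] e1 using fin unfolding e2 .
qed

context bprod
begin

lemma char_bound:
  assumes t: "t > 0" and v: "var_f b t > 0"
  defines "\<sigma> \<equiv> sqrt (var_f b t)" and "m \<equiv> mean_f b t"
  shows "(\<lambda>n. complex_of_real (Xprob b t n) * iexp (u * ((real n - m) / \<sigma>))) sums
          (\<Sum>n. complex_of_real (Xprob b t n) * iexp (u * ((real n - m) / \<sigma>)))"
    and "cmod ((\<Sum>n. complex_of_real (Xprob b t n) * iexp (u * ((real n - m) / \<sigma>))) - complex_of_real (exp (- (u^2) / 2)))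
          \<le> var_f b t * (\<bar>u / \<sigma>\<bar>^3 / 6 + (u / \<sigma>)^4 / 32)"
proof -
  define v where "v = var_f b t"
  define s where "s = u / \<sigma>"
  define w where "w = iexp s"
  define t' where "t' = complex_of_real t"
  define F where "F = fval b t"
  define c where "c = iexp (- s * m)"
  have Fpos: "F > 0" using fval_pos t by (simp add: F_def)
  have Fc: "complex_of_real F \<noteq> 0" using Fpos by simp
  have fF: "f t' = complex_of_real F" using f_real by (simp add: F_def t'_def)
  have \<sigma>: "\<sigma> > 0" using v by (simp add: \<sigma>_def)
  have \<sigma>2: "\<sigma>^2 = v" using v by (simp add: \<sigma>_def v_def)
  have "(\<lambda>n. c / complex_of_real F * (complex_of_real (a n) * (t' * w) ^ n)) sums (c / complex_of_real F * f (t' * w))"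
    by (intro sums_mult taylor)
  moreover have "c / complex_of_real F * (complex_of_real (a n) * (t' * w) ^ n) =
       complex_of_real (Xprob b t n) * iexp (u * ((real n - m) / \<sigma>))" for n
  proof -
    have "w ^ n = exp (of_nat n * (\<i> * complex_of_real s))" unfolding w_def by (rule exp_of_nat_mult[symmetric])
    hence "c * w ^ n = exp (\<i> * complex_of_real (- s * m)) * exp (of_nat n * (\<i> * complex_of_real s))"
      by (simp add: c_def)
    also have "\<dots> = exp (\<i> * complex_of_real (- s * m) + of_nat n * (\<i> * complex_of_real s))"
      by (rule exp_add[symmetric])
    also have "\<i> * complex_of_real (- s * m) + of_nat n * (\<i> * complex_of_real s) = \<i> * complex_of_real (u * ((real n - m) / \<sigma>))"
      using \<sigma> by (simp add: s_def field_simps)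
    finally have "c * w ^ n = iexp (u * ((real n - m) / \<sigma>))" .
    thus ?thesis by (simp add: Xprob_def F_def t'_def power_mult_distrib field_simps)
  qed
  ultimately have S: "(\<lambda>n. complex_of_real (Xprob b t n) * iexp (u * ((real n - m) / \<sigma>))) sums (c / complex_of_real F * f (t' * w))"
    by simp
  thus "(\<lambda>n. complex_of_real (Xprob b t n) * iexp (u * ((real n - m) / \<sigma>))) sums
          (\<Sum>n. complex_of_real (Xprob b t n) * iexp (u * ((real n - m) / \<sigma>)))"
    by (simp add: sums_iff)
  have Seq: "(\<Sum>n. complex_of_real (Xprob b t n) * iexp (u * ((real n - m) / \<sigma>))) = c / complex_of_real F * f (t' * w)"
    using S by (simp add: sums_iff)
  define z where "z = (\<lambda>k. iexp (- s * pp t k) * (complex_of_real (1 - pp t k) + complex_of_real (pp t k) * iexp s))"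
  define wk where "wk = (\<lambda>k. complex_of_real (exp (- (s^2 * (pp t k * (1 - pp t k))) / 2)))"
  have m_sums: "pp t sums m" using mean_eq[OF t] moments(3)[OF t] by (simp add: m_def sums_iff)
  have l1: "(\<lambda>N. iexp (- s * (\<Sum>k<N. pp t k))) \<longlonglongrightarrow> c"
    unfolding c_def using m_sums unfolding sums_def by (intro tendsto_intros)
  have l2: "(\<lambda>N. \<Prod>k<N. 1 + t' * w / complex_of_real (b k)) \<longlonglongrightarrow> f (t' * w)" by (rule pw)
  have l3: "(\<lambda>N. \<Prod>k<N. 1 + t' / complex_of_real (b k)) \<longlonglongrightarrow> complex_of_real F"
    using pw[of t'] fF by simp
  have "(\<lambda>N. iexp (- s * (\<Sum>k<N. pp t k)) * (\<Prod>k<N. 1 + t' * w / complex_of_real (b k)) / (\<Prod>k<N. 1 + t' / complex_of_real (b k)))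
      \<longlonglongrightarrow> c * f (t' * w) / complex_of_real F"
    by (intro tendsto_intros l1 l2 l3 Fc)
  moreover have "iexp (- s * (\<Sum>k<N. pp t k)) * (\<Prod>k<N. 1 + t' * w / complex_of_real (b k)) / (\<Prod>k<N. 1 + t' / complex_of_real (b k))
      = (\<Prod>k<N. z k)" for N
  proof -
    have "(\<Sum>k<N. \<i> * complex_of_real (- s * pp t k)) = \<i> * (\<Sum>k<N. complex_of_real (- s * pp t k))"
      by (rule sum_distrib_left[symmetric])
    also have "\<dots> = \<i> * complex_of_real (\<Sum>k<N. - s * pp t k)" by simp
    also have "\<dots> = \<i> * complex_of_real (- s * (\<Sum>k<N. pp t k))" by (simp add: sum_distrib_left)
    finally have "iexp (- s * (\<Sum>k<N. pp t k)) = exp (\<Sum>k<N. \<i> * complex_of_real (- s * pp t k))"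
      by simp
    also have "\<dots> = (\<Prod>k<N. iexp (- s * pp t k))" by (simp add: exp_sum)
    finally have e1: "iexp (- s * (\<Sum>k<N. pp t k)) = (\<Prod>k<N. iexp (- s * pp t k))" .
    have e2: "(1 + t' * w / complex_of_real (b k)) / (1 + t' / complex_of_real (b k)) =
        complex_of_real (1 - pp t k) + complex_of_real (pp t k) * w" for k
    proof -
      define B where "B = complex_of_real (b k)"
      have BT: "B + t' \<noteq> 0" using bpos[of k] t by (simp add: t'_def B_def complex_eq_iff)
      have B0: "B \<noteq> 0" using bnz[of k] by (simp add: B_def)
      have "1 + t' * w / B = (B + t' * w) / B" "1 + t' / B = (B + t') / B" using B0 by (simp_all add: field_simps)
      hence l: "(1 + t' * w / B) / (1 + t' / B) = (B + t' * w) / (B + t')"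
        using BT B0 by simp
      have bt: "b k + t \<noteq> 0" using bpos[of k] t by simp
      have "1 - pp t k = b k / (b k + t)" using bt by (simp add: pp_def field_simps)
      hence "complex_of_real (1 - pp t k) = B / (B + t')" by (simp add: of_real_divide B_def t'_def)
      moreover have "complex_of_real (pp t k) = t' / (B + t')" by (simp add: pp_def of_real_divide B_def t'_def)
      ultimately have r: "complex_of_real (1 - pp t k) + complex_of_real (pp t k) * w = (B + t' * w) / (B + t')"
        using BT by (simp add: field_simps)
      show ?thesis unfolding B_def[symmetric] l r ..
    qed
    show ?thesis
      unfolding e1 z_def w_def[symmetric] e2[symmetric] prod.distrib[symmetric] prod_dividef[symmetric]
      by (simp add: algebra_simps)
  qed
  ultimately have Zlim: "(\<lambda>N. \<Prod>k<N. z k) \<longlonglongrightarrow> c / complex_of_real F * f (t' * w)" by simp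
  have vs: "(\<lambda>k. pp t k * (1 - pp t k)) sums v" using var_sums[OF t] by (simp add: v_def)
  have "(\<lambda>N. complex_of_real (exp (- (s^2 * (\<Sum>k<N. pp t k * (1 - pp t k))) / 2))) \<longlonglongrightarrow> complex_of_real (exp (- (s^2 * v) / 2))"
    using vs unfolding sums_def by (intro tendsto_intros) auto
  moreover have "complex_of_real (exp (- (s^2 * (\<Sum>k<N. pp t k * (1 - pp t k))) / 2)) = (\<Prod>k<N. wk k)" for N
  proof -
    have "exp (- (s^2 * (\<Sum>k<N. pp t k * (1 - pp t k))) / 2) = exp (\<Sum>k<N. - (s^2 * (pp t k * (1 - pp t k))) / 2)"
      by (simp add: sum_distrib_left sum_divide_distrib sum_negf)
    also have "\<dots> = (\<Prod>k<N. exp (- (s^2 * (pp t k * (1 - pp t k))) / 2))" by (simp add: exp_sum)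
    finally show ?thesis by (simp add: wk_def)
  qed
  moreover have "s^2 * v = u^2"
  proof -
    have "s^2 * v = u^2 / \<sigma>^2 * \<sigma>^2" by (simp add: s_def power_divide \<sigma>2)
    also have "\<dots> = u^2" using \<sigma> by simp
    finally show ?thesis .
  qed
  ultimately have Wlim: "(\<lambda>N. \<Prod>k<N. wk k) \<longlonglongrightarrow> complex_of_real (exp (- (u^2) / 2))" by simp
  define B where "B = \<bar>s\<bar>^3 / 6 + s^4 / 32"
  have B0: "B \<ge> 0" by (simp add: B_def)
  have "cmod ((\<Prod>k<N. z k) - (\<Prod>k<N. wk k)) \<le> v * B" for N
  proof -
    have "cmod ((\<Prod>k<N. z k) - (\<Prod>k<N. wk k)) \<le> (\<Sum>k<N. cmod (z k - wk k))"
    proof (rule norm_prod_diff)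
      fix k
      have "cmod (complex_of_real (1 - pp t k) + complex_of_real (pp t k) * iexp s) \<le> cmod (complex_of_real (1 - pp t k)) + cmod (complex_of_real (pp t k) * iexp s)"
        by (rule norm_triangle_ineq)
      also have "\<dots> = 1"
      proof -
        have "cmod (complex_of_real (1 - pp t k)) = 1 - pp t k"
          unfolding norm_of_real using pp_bounds[OF t, of k] by simp
        moreover have "cmod (complex_of_real (pp t k) * iexp s) = pp t k"
          using pp_bounds[OF t, of k] by (simp add: norm_mult)
        ultimately show ?thesis by simp
      qed
      finally show "cmod (z k) \<le> 1" by (simp add: z_def norm_mult)
      show "cmod (wk k) \<le> 1" using pp_bounds[OF t, of k] by (simp add: wk_def mult_nonneg_nonneg)
    qed
    also have "\<dots> \<le> (\<Sum>k<N. pp t k * (1 - pp t k) * B)"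
      unfolding z_def wk_def B_def using pp_bounds[OF t] by (intro sum_mono bern) (auto simp: less_imp_le)
    also have "\<dots> \<le> (\<Sum>k. pp t k * (1 - pp t k) * B)"
      using vs pp_bounds[OF t] B0 by (intro sum_le_suminf summable_mult2) (auto simp: sums_iff less_imp_le)
    also have "\<dots> = v * B" using vs by (simp add: sums_iff suminf_mult2[symmetric])
    finally show ?thesis .
  qed
  moreover have "(\<lambda>N. cmod ((\<Prod>k<N. z k) - (\<Prod>k<N. wk k))) \<longlonglongrightarrow>
      cmod (c / complex_of_real F * f (t' * w) - complex_of_real (exp (- (u^2) / 2)))"
    by (intro tendsto_intros Zlim Wlim)
  ultimately have "cmod (c / complex_of_real F * f (t' * w) - complex_of_real (exp (- (u^2) / 2))) \<le> v * B"
    by (intro tendsto_upperbound[where F=sequentially]) (auto intro: always_eventually)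
  thus "cmod ((\<Sum>n. complex_of_real (Xprob b t n) * iexp (u * ((real n - m) / \<sigma>))) - complex_of_real (exp (- (u^2) / 2)))
          \<le> var_f b t * (\<bar>u / \<sigma>\<bar>^3 / 6 + (u / \<sigma>)^4 / 32)"
    unfolding Seq by (simp add: v_def B_def s_def)
qed

end

lemma std_cdf_eq: "std_normal_cdf x = cdf std_normal_distribution x"
proof -
  have "cdf std_normal_distribution x = integral\<^sup>L std_normal_distribution (indicator {..x})"
    by (simp add: cdf_def)
  also have "\<dots> = (\<integral>y. std_normal_density y * indicator {..x} y \<partial>lborel)"
    by (rule integral_real_density) (auto simp: normal_density_nonneg)
  also have "\<dots> = std_normal_cdf x"
    by (simp add: std_normal_cdf_def set_lebesgue_integral_def mult.commute)
  finally show ?thesis by simp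
qed

lemma std_cdf_cont: "isCont (cdf std_normal_distribution) x"
proof -
  interpret real_distribution std_normal_distribution by (rule real_dist_normal_dist)
  have "AE y in lborel. y \<in> {x} \<longrightarrow> std_normal_density y = 0"
    using AE_lborel_singleton[of x] by eventually_elim auto
  hence "{x} \<in> null_sets std_normal_distribution"
    by (subst null_sets_density_iff) auto
  hence "measure std_normal_distribution {x} = 0" by (rule measure_eq_0_null_sets)
  thus ?thesis by (simp add: isCont_cdf)
qed

context bprod
begin

definition Nt :: "real \<Rightarrow> nat measure" where
  "Nt t = density (count_space UNIV) (\<lambda>n. ennreal (Xprob b t n))"

definition gt :: "real \<Rightarrow> nat \<Rightarrow> real" where
  "gt t n = (real n - mean_f b t) / sqrt (var_f b t)"

definition Mt :: "real \<Rightarrow> real measure" where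
  "Mt t = distr (Nt t) borel (gt t)"

lemma gt_meas: "gt t \<in> measurable (Nt t) borel"
  by (simp add: Nt_def)

lemma emeasure_Nt: assumes t: "t > 0"
  shows "emeasure (Nt t) A = ennreal (\<Sum>n. Xprob b t n * indicator A n)"
    and "summable (\<lambda>n. Xprob b t n * indicator A n)"
proof -
  show sm: "summable (\<lambda>n. Xprob b t n * indicator A n)"
    by (rule summable_comparison_test'[where g="Xprob b t" and N=0])
       (use Xprob_sums[OF t] Xprob_nonneg[OF t] in \<open>auto simp: sums_iff indicator_def\<close>)
  have "emeasure (Nt t) A = (\<integral>\<^sup>+ n. ennreal (Xprob b t n) * indicator A n \<partial>count_space UNIV)"
    unfolding Nt_def by (subst emeasure_density) auto
  also have "\<dots> = (\<integral>\<^sup>+ n. ennreal (Xprob b t n * indicator A n) \<partial>count_space UNIV)"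
    by (intro nn_integral_cong) (auto simp: indicator_def)
  also have "\<dots> = (\<Sum>n. ennreal (Xprob b t n * indicator A n))"
    by (rule nn_integral_count_space_nat)
  also have "\<dots> = ennreal (\<Sum>n. Xprob b t n * indicator A n)"
    by (rule suminf_ennreal2[OF _ sm]) (use Xprob_nonneg[OF t] in \<open>auto simp: indicator_def\<close>)
  finally show "emeasure (Nt t) A = ennreal (\<Sum>n. Xprob b t n * indicator A n)" .
qed

lemma Mt_real_distr: assumes t: "t > 0" shows "real_distribution (Mt t)"
proof -
  have "emeasure (Nt t) (space (Nt t)) = ennreal (\<Sum>n. Xprob b t n * indicator (space (Nt t)) n)"
    by (rule emeasure_Nt[OF t])
  also have "(\<Sum>n. Xprob b t n * indicator (space (Nt t)) n) = (\<Sum>n. Xprob b t n)"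
    by (simp add: Nt_def)
  also have "\<dots> = 1" using Xprob_sums[OF t] by (simp add: sums_iff)
  finally have "prob_space (Nt t)" by (intro prob_spaceI) simp
  hence "prob_space (Mt t)" unfolding Mt_def by (rule prob_space.prob_space_distr[OF _ gt_meas])
  thus ?thesis by (simp add: real_distribution_def real_distribution_axioms_def Mt_def)
qed

lemma cdf_Mt: assumes t: "t > 0" shows "cdf (Mt t) x = normalized_cdf b t x"
proof -
  have "cdf (Mt t) x = measure (Nt t) (gt t -` {..x} \<inter> space (Nt t))"
    unfolding cdf_def Mt_def by (rule measure_distr[OF gt_meas]) simp
  also have "\<dots> = (\<Sum>n. Xprob b t n * indicator (gt t -` {..x} \<inter> space (Nt t)) n)"
  proof -
    define A where "A = gt t -` {..x} \<inter> space (Nt t)"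
    have "0 \<le> (\<Sum>n. Xprob b t n * indicator A n)"
      by (rule suminf_nonneg[OF emeasure_Nt(2)[OF t]]) (use Xprob_nonneg[OF t] in \<open>simp add: indicator_def\<close>)
    hence "measure (Nt t) A = (\<Sum>n. Xprob b t n * indicator A n)"
      unfolding measure_def emeasure_Nt(1)[OF t] by simp
    thus ?thesis by (simp add: A_def)
  qed
  also have "\<dots> = normalized_cdf b t x"
    unfolding normalized_cdf_def by (intro suminf_cong) (simp add: gt_def Nt_def indicator_def)
  finally show ?thesis .
qed

lemma char_Mt: assumes t: "t > 0"
  shows "char (Mt t) u = (\<Sum>n. complex_of_real (Xprob b t n) * iexp (u * gt t n))"
proof -
  have "char (Mt t) u = integral\<^sup>L (Nt t) (\<lambda>n. iexp (u * gt t n))"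
    unfolding char_def Mt_def by (rule integral_distr[OF gt_meas]) simp
  also have "\<dots> = integral\<^sup>L (count_space UNIV) (\<lambda>n. Xprob b t n *\<^sub>R iexp (u * gt t n))"
    unfolding Nt_def by (rule integral_density) (use Xprob_nonneg[OF t] in auto)
  also have "\<dots> = (\<Sum>n. Xprob b t n *\<^sub>R iexp (u * gt t n))"
  proof (rule integral_count_space_nat)
    show "integrable (count_space UNIV) (\<lambda>n. Xprob b t n *\<^sub>R iexp (u * gt t n))"
      unfolding integrable_count_space_nat_iff using Xprob_sums[OF t] Xprob_nonneg[OF t]
      by (simp add: sums_iff)
  qed
  finally show ?thesis by (simp add: scaleR_conv_of_real)
qed

end

lemma bound_alg: fixes \<sigma> u :: real assumes "\<sigma> > 0"
  shows "\<sigma>^2 * (\<bar>u / \<sigma>\<bar>^3 / 6 + (u / \<sigma>)^4 / 32) = \<bar>u\<bar>^3 / 6 * inverse \<sigma> + u^4 / 32 * inverse (\<sigma>^2)"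
  using assms by (simp add: abs_divide power_divide field_simps power2_eq_square power3_eq_cube power4_eq_xxxx)

theorem proposition4p6:
  fixes b :: "nat \<Rightarrow> real"
  assumes "mono b"
    and "\<And>j. b j > 0"
    and "summable (\<lambda>j. 1 / b j)"
    and "filterlim (var_f b) at_top at_top"
  shows "gaussian b"
proof -
  interpret bprod b by unfold_locales (use assms in auto)
  have "eventually (\<lambda>t. var_f b t \<ge> 1) at_top" using assms(4) by (simp add: filterlim_at_top)
  then obtain N where N: "\<And>t. t \<ge> N \<Longrightarrow> var_f b t \<ge> 1" by (auto simp: eventually_at_top_linorder)
  define t0 where "t0 = max N 1"
  have t0: "t0 > 0" "\<And>t. t \<ge> t0 \<Longrightarrow> var_f b t > 0"
    using N by (auto simp: t0_def) (smt (verit) N)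
  show ?thesis unfolding gaussian_def
  proof
    fix x
    show "((\<lambda>t. normalized_cdf b t x) \<longlongrightarrow> std_normal_cdf x) at_top"
    proof (rule tendsto_at_topI_sequentially)
      fix X :: "nat \<Rightarrow> real" assume X: "filterlim X at_top sequentially"
      define Y where "Y n = max (X n) t0" for n
      have Y: "filterlim Y at_top sequentially"
        by (rule filterlim_at_top_mono[OF X]) (auto simp: Y_def)
      have Ypos: "Y n > 0" for n using t0(1) by (simp add: Y_def)
      have Yv: "var_f b (Y n) > 0" for n using t0(2) by (simp add: Y_def)
      define M where "M n = Mt (Y n)" for n
      have rd: "real_distribution (M n)" for n unfolding M_def by (rule Mt_real_distr[OF Ypos])
      have vinf: "filterlim (\<lambda>n. var_f b (Y n)) at_top sequentially"
        by (rule filterlim_compose[OF assms(4) Y])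
      have sinf: "filterlim (\<lambda>n. sqrt (var_f b (Y n))) at_top sequentially"
        by (rule filterlim_compose[OF sqrt_at_top vinf])
      have charconv: "(\<lambda>n. char (M n) u) \<longlonglongrightarrow> char std_normal_distribution u" for u
      proof -
        define e where "e = complex_of_real (exp (- (u^2) / 2))"
        have "(\<lambda>n. char (M n) u - e) \<longlonglongrightarrow> 0"
        proof (rule Lim_null_comparison)
          show "\<forall>\<^sub>F n in sequentially. norm (char (M n) u - e) \<le>
              \<bar>u\<bar>^3 / 6 * inverse (sqrt (var_f b (Y n))) + u^4 / 32 * inverse (var_f b (Y n))"
          proof (intro always_eventually allI)
            fix n
            define \<sigma> where "\<sigma> = sqrt (var_f b (Y n))"
            have \<sigma>: "\<sigma> > 0" "\<sigma>^2 = var_f b (Y n)" using Yv[of n] by (simp_all add: \<sigma>_def)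
            have "char (M n) u = (\<Sum>k. complex_of_real (Xprob b (Y n) k) * iexp (u * ((real k - mean_f b (Y n)) / \<sigma>)))"
              unfolding M_def char_Mt[OF Ypos] by (simp add: gt_def \<sigma>_def)
            hence "norm (char (M n) u - e) \<le> var_f b (Y n) * (\<bar>u / \<sigma>\<bar>^3 / 6 + (u / \<sigma>)^4 / 32)"
              using char_bound(2)[OF Ypos Yv, where u=u] by (simp add: e_def \<sigma>_def)
            also have "\<dots> = \<bar>u\<bar>^3 / 6 * inverse \<sigma> + u^4 / 32 * inverse (var_f b (Y n))"
              using bound_alg[OF \<sigma>(1), where u=u] \<sigma>(2) by simp
            finally show "norm (char (M n) u - e) \<le>
              \<bar>u\<bar>^3 / 6 * inverse (sqrt (var_f b (Y n))) + u^4 / 32 * inverse (var_f b (Y n))"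
              by (simp add: \<sigma>_def)
          qed
          show "(\<lambda>n. \<bar>u\<bar>^3 / 6 * inverse (sqrt (var_f b (Y n))) + u^4 / 32 * inverse (var_f b (Y n))) \<longlonglongrightarrow> 0"
            using tendsto_inverse_0_at_top[OF sinf] tendsto_inverse_0_at_top[OF vinf]
            by (intro tendsto_add_zero tendsto_mult_right_zero)
        qed
        hence "(\<lambda>n. char (M n) u) \<longlonglongrightarrow> e" by (rule LIM_zero_cancel)
        thus ?thesis by (simp add: char_std_normal_distribution e_def)
      qed
      have "weak_conv_m M std_normal_distribution"
        by (rule levy_continuity[OF rd real_dist_normal_dist charconv])
      hence "(\<lambda>n. cdf (M n) x) \<longlonglongrightarrow> cdf std_normal_distribution x"
        using std_cdf_cont unfolding weak_conv_m_def weak_conv_def by blast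
      hence lim: "(\<lambda>n. normalized_cdf b (Y n) x) \<longlonglongrightarrow> std_normal_cdf x"
        by (simp add: M_def cdf_Mt[OF Ypos] std_cdf_eq)
      have "eventually (\<lambda>n. X n \<ge> t0) sequentially" using X by (simp add: filterlim_at_top)
      hence "eventually (\<lambda>n. normalized_cdf b (Y n) x = normalized_cdf b (X n) x) sequentially"
        by eventually_elim (simp add: Y_def)
      from tendsto_cong[OF this] lim show "(\<lambda>n. normalized_cdf b (X n) x) \<longlonglongrightarrow> std_normal_cdf x" by simp
    qed
  qed
qed

end
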